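(* Let $\varphi$ be a non-trivial primitive Dirichlet character of conductor $f$, and let $N,M,L$ be positive integers with $f^2ML\mid N$ and $(fM,L)=1$. Then $12\,\tilde\beta_{\Gamma_0(N),\varphi,M,L}\in\mathbb{Z}[\zeta_f,\varphi]$.
   Context: $T_1=\prod_{l\mid M,\ l\nmid f}l$, $T_2=\prod_{q\mid L}q$ (over primes). $\xi$ is the primitive character associated to $\varphi^2$, of conductor $n$; $\tau(\chi)$ is the Gauss sum; $B_2(\chi)=m\sum_{a=0}^{m-1}\chi(a)((a/m)^2-a/m+1/6)$ for primitive $\chi$ of conductor $m$. $S_\varphi$ is the set of primes $q\mid T_2$ with $\varphi(q)=\pm1$ and $\phi(T_{2,\varphi})=\prod_{q\in S_\varphi}(q-1)$. For $p\mid f$, $\delta_p=1$ if $\nu_p(M)=0$ and $\nu_p(N/f^2)\ge1$, otherwise $\delta_p=0$. $\beta_{\Gamma_0(N),\varphi,M,L}=\frac{f^3T_1\phi(T_{2,\varphi})}{4n}\big(\prod_{p\mid f}p^{\nu_p(M)+\delta_p}\big)\frac{\tau(\varphi^{-1})}{\tau(\xi^{-1})}B_2(\xi^{-1})\prod_{p\mid fT_1}(1-\xi(p)p^{-2})$ and $\tilde\beta_{\Gamma_0(N),\varphi,M,L}=fT_1\beta_{\Gamma_0(N),\varphi,M,L}$. *)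

theory Defs
  imports Complex_Main "HOL-Number_Theory.Number_Theory"
begin

definition dchar :: "nat \<Rightarrow> (nat \<Rightarrow> complex) \<Rightarrow> bool" where
  "dchar m \<chi> \<longleftrightarrow> m > 0 \<and> (\<forall>a. \<chi> (a + m) = \<chi> a) \<and>
     (\<forall>a b. \<chi> (a * b) = \<chi> a * \<chi> b) \<and> \<chi> 1 = 1 \<and>
     (\<forall>a. \<chi> a = 0 \<longleftrightarrow> \<not> coprime a m)"

text \<open>Primitive character of conductor m: not induced from any proper divisor d of m.\<close>
definition primitive_dchar :: "nat \<Rightarrow> (nat \<Rightarrow> complex) \<Rightarrow> bool" where
  "primitive_dchar m \<chi> \<longleftrightarrow> dchar m \<chi> \<and>
     (\<forall>d. d dvd m \<and> d < m \<longrightarrow> (\<exists>a. coprime a m \<and> [a = 1] (mod d) \<and> \<chi> a \<noteq> 1))"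

text \<open>Inverse character (inverse 0 = 0).\<close>
definition dchar_inv :: "(nat \<Rightarrow> complex) \<Rightarrow> nat \<Rightarrow> complex" where
  "dchar_inv \<chi> = (\<lambda>a. inverse (\<chi> a))"

definition gauss_sum :: "nat \<Rightarrow> (nat \<Rightarrow> complex) \<Rightarrow> complex" where
  "gauss_sum m \<chi> = (\<Sum>a<m. \<chi> a * exp (2 * pi * \<i> * of_nat a / of_nat m))"

definition B2 :: "nat \<Rightarrow> (nat \<Rightarrow> complex) \<Rightarrow> complex" where
  "B2 m \<chi> = of_nat m * (\<Sum>a<m. \<chi> a *
      of_real ((real a / real m)^2 - real a / real m + 1/6))"

definition T1 :: "nat \<Rightarrow> nat \<Rightarrow> nat" where
  "T1 f M = (\<Prod>l\<in>{l. prime l \<and> l dvd M \<and> \<not> l dvd f}. l)"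

definition T2 :: "nat \<Rightarrow> nat" where
  "T2 L = (\<Prod>q\<in>{q. prime q \<and> q dvd L}. q)"

definition S_phi :: "(nat \<Rightarrow> complex) \<Rightarrow> nat \<Rightarrow> nat set" where
  "S_phi \<phi> L = {q. prime q \<and> q dvd T2 L \<and> (\<phi> q = 1 \<or> \<phi> q = -1)}"

definition phi_T2 :: "(nat \<Rightarrow> complex) \<Rightarrow> nat \<Rightarrow> nat" where
  "phi_T2 \<phi> L = (\<Prod>q\<in>S_phi \<phi> L. q - 1)"

definition delta :: "nat \<Rightarrow> nat \<Rightarrow> nat \<Rightarrow> nat \<Rightarrow> nat" where
  "delta f N M p = (if multiplicity p M = 0 \<and> multiplicity p (N div f^2) \<ge> 1 then 1 else 0)"

text \<open>beta_{Gamma_0(N),phi,M,L}; xi is the primitive character of conductor n attached to phi^2.\<close>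
definition beta :: "nat \<Rightarrow> (nat \<Rightarrow> complex) \<Rightarrow> nat \<Rightarrow> (nat \<Rightarrow> complex)
                     \<Rightarrow> nat \<Rightarrow> nat \<Rightarrow> nat \<Rightarrow> complex" where
  "beta f \<phi> n \<xi> N M L =
     of_nat (f^3 * T1 f M * phi_T2 \<phi> L) / (4 * of_nat n)
     * of_nat (\<Prod>p\<in>{p. prime p \<and> p dvd f}. p ^ (multiplicity p M + delta f N M p))
     * (gauss_sum f (dchar_inv \<phi>) / gauss_sum n (dchar_inv \<xi>))
     * B2 n (dchar_inv \<xi>)
     * (\<Prod>p\<in>{p. prime p \<and> p dvd f * T1 f M}. 1 - \<xi> p / of_nat p ^ 2)"

definition beta_tilde :: "nat \<Rightarrow> (nat \<Rightarrow> complex) \<Rightarrow> nat \<Rightarrow> (nat \<Rightarrow> complex)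
                     \<Rightarrow> nat \<Rightarrow> nat \<Rightarrow> nat \<Rightarrow> complex" where
  "beta_tilde f \<phi> n \<xi> N M L = of_nat (f * T1 f M) * beta f \<phi> n \<xi> N M L"

inductive_set Z_zeta_phi :: "nat \<Rightarrow> (nat \<Rightarrow> complex) \<Rightarrow> complex set" for f \<phi> where
  int: "of_int k \<in> Z_zeta_phi f \<phi>"
| zeta: "exp (2 * pi * \<i> / of_nat f) \<in> Z_zeta_phi f \<phi>"
| val: "\<phi> a \<in> Z_zeta_phi f \<phi>"
| add: "x \<in> Z_zeta_phi f \<phi> \<Longrightarrow> y \<in> Z_zeta_phi f \<phi> \<Longrightarrow> x + y \<in> Z_zeta_phi f \<phi>"
| mult: "x \<in> Z_zeta_phi f \<phi> \<Longrightarrow> y \<in> Z_zeta_phi f \<phi> \<Longrightarrow> x * y \<in> Z_zeta_phi f \<phi>"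

end

theory Submission
  imports Defs
begin


lemma R_int: "of_int k \<in> Z_zeta_phi f \<phi>" by (rule Z_zeta_phi.int)
lemma R_nat: "of_nat k \<in> Z_zeta_phi f \<phi>"
  using Z_zeta_phi.int[of "int k" f \<phi>] by simp
lemma R_0: "0 \<in> Z_zeta_phi f \<phi>" using R_nat[of 0] by simp
lemma R_1: "1 \<in> Z_zeta_phi f \<phi>" using R_nat[of 1] by simp
lemma R_add: "x \<in> Z_zeta_phi f \<phi> \<Longrightarrow> y \<in> Z_zeta_phi f \<phi> \<Longrightarrow> x + y \<in> Z_zeta_phi f \<phi>"
  by (rule Z_zeta_phi.add)
lemma R_mult: "x \<in> Z_zeta_phi f \<phi> \<Longrightarrow> y \<in> Z_zeta_phi f \<phi> \<Longrightarrow> x * y \<in> Z_zeta_phi f \<phi>"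
  by (rule Z_zeta_phi.mult)
lemma R_diff: "x \<in> Z_zeta_phi f \<phi> \<Longrightarrow> y \<in> Z_zeta_phi f \<phi> \<Longrightarrow> x - y \<in> Z_zeta_phi f \<phi>"
proof -
  assume a: "x \<in> Z_zeta_phi f \<phi>" "y \<in> Z_zeta_phi f \<phi>"
  have "x - y = x + of_int (-1) * y" by simp
  thus ?thesis using a R_int R_add R_mult by metis
qed
lemma R_pow: "x \<in> Z_zeta_phi f \<phi> \<Longrightarrow> x ^ k \<in> Z_zeta_phi f \<phi>"
  by (induction k) (auto intro: R_1 R_mult)
lemma R_sum: "(\<And>x. x \<in> A \<Longrightarrow> g x \<in> Z_zeta_phi f \<phi>) \<Longrightarrow> sum g A \<in> Z_zeta_phi f \<phi>"
  by (induction A rule: infinite_finite_induct) (auto intro: R_0 R_add)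
lemma R_prod: "(\<And>x. x \<in> A \<Longrightarrow> g x \<in> Z_zeta_phi f \<phi>) \<Longrightarrow> prod g A \<in> Z_zeta_phi f \<phi>"
  by (induction A rule: infinite_finite_induct) (auto intro: R_1 R_mult)

lemma periodic_mult:
  assumes "\<forall>y. h (y + n) = h (y::nat)"
  shows "h (y + n * k) = h y"
proof (induction k)
  case (Suc k)
  have "h (y + n * Suc k) = h ((y + n * k) + n)" by (simp add: algebra_simps)
  also have "\<dots> = h (y + n * k)" using assms by blast
  finally show ?case using Suc by simp
qed simp

lemma periodic_mod:
  assumes "\<forall>y. h (y + n) = h (y::nat)"
  shows "h (y mod n) = h y"
  using periodic_mult[OF assms, of "y mod n" "y div n"] by simp

lemma dchar_mod: "dchar m \<chi> \<Longrightarrow> \<chi> (a mod m) = \<chi> a"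
  unfolding dchar_def by (intro periodic_mod) auto

lemma dchar_cong: "dchar m \<chi> \<Longrightarrow> [a = b] (mod m) \<Longrightarrow> \<chi> a = \<chi> b"
  unfolding cong_def by (metis dchar_mod)

lemma dchar_pow: "dchar m \<chi> \<Longrightarrow> \<chi> (a ^ k) = \<chi> a ^ k"
  by (induction k) (auto simp: dchar_def)

lemma dchar_unit_pow: assumes "dchar m \<chi>" "coprime a m" shows "\<chi> a ^ totient m = 1"
proof -
  have "[a ^ totient m = 1] (mod m)" using euler_theorem assms(2) by blast
  hence "\<chi> (a ^ totient m) = \<chi> 1" using dchar_cong[OF assms(1)] by blast
  thus ?thesis using assms(1) dchar_pow[OF assms(1)] by (simp add: dchar_def)
qed

lemma dchar_inv_eq: assumes "dchar m \<chi>" shows "inverse (\<chi> a) = (if coprime a m then \<chi> a ^ (totient m - 1) else 0)"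
proof (cases "coprime a m")
  case True
  have m: "m > 0" using assms by (simp add: dchar_def)
  hence "totient m > 0" by simp
  hence "\<chi> a ^ totient m = \<chi> a * \<chi> a ^ (totient m - 1)"
    by (metis Suc_diff_1 power_Suc)
  hence "\<chi> a * \<chi> a ^ (totient m - 1) = 1" using dchar_unit_pow[OF assms True] by simp
  thus ?thesis using True by (simp add: inverse_unique)
next
  case False
  thus ?thesis using assms by (simp add: dchar_def)
qed

lemma crt_gen:
  fixes n m a b :: nat
  assumes "[a = b] (mod gcd n m)"
  shows "\<exists>x. [x = a] (mod n) \<and> [x = b] (mod m)"
proof -
  have "[int a = int b] (mod int (gcd n m))" using assms by (simp add: cong_int_iff)
  hence "int (gcd n m) dvd int a - int b" by (simp add: cong_iff_dvd_diff)
  then obtain t where t: "int a - int b = int (gcd n m) * t" by (auto simp: dvd_def)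
  obtain u v where uv: "u * int n + v * int m = gcd (int n) (int m)" using bezout_int by blast
  define x0 where "x0 = int a - t * u * int n"
  have x0b: "x0 = int b + t * v * int m"
  proof -
    have uv': "u * int n + v * int m = int (gcd n m)" using uv by (simp add: gcd_int_int_eq)
    have "t * int (gcd n m) = t * (u * int n + v * int m)" using uv' by simp
    hence "t * int (gcd n m) = t * u * int n + t * v * int m" by (simp add: algebra_simps)
    thus ?thesis using t unfolding x0_def by (simp add: algebra_simps)
  qed
  define x where "x = nat (x0 mod (int n * int m))"
  show ?thesis
  proof (cases "n = 0 \<or> m = 0")
    case True
    thus ?thesis
    proof
      assume "n = 0" thus ?thesis using assms by (intro exI[of _ a]) (auto simp: cong_sym)
    next
      assume "m = 0" thus ?thesis using assms by (intro exI[of _ b]) (auto simp: cong_sym)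
    qed
  next
    case False
    hence pos: "int n * int m > 0" by simp
    have xx: "int x = x0 mod (int n * int m)" unfolding x_def using pos by simp
    have "[int x = x0] (mod int n)" unfolding xx cong_def by (simp add: mod_mod_cancel)
    moreover have "[x0 = int a] (mod int n)" unfolding x0_def cong_iff_dvd_diff by simp
    ultimately have 1: "[int x = int a] (mod int n)" using cong_trans by blast
    have "[int x = x0] (mod int m)" unfolding xx cong_def
      by (metis dvd_triv_right mod_mod_cancel)
    moreover have "[x0 = int b] (mod int m)" unfolding x0b cong_iff_dvd_diff by simp
    ultimately have 2: "[int x = int b] (mod int m)" using cong_trans by blast
    show ?thesis using 1 2 by (auto simp: cong_int_iff)
  qed
qed

lemma bij_mult_mod:
  fixes n c :: nat
  assumes "n > 0" "coprime c n"
  shows "bij_betw (\<lambda>a. a * c mod n) {..<n} {..<n}"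
proof -
  have inj: "inj_on (\<lambda>a. a * c mod n) {..<n}"
  proof (rule inj_onI)
    fix a b assume ab: "a \<in> {..<n}" "b \<in> {..<n}" "a * c mod n = b * c mod n"
    hence "[a * c = b * c] (mod n)" by (simp add: cong_def)
    hence "[a = b] (mod n)" using assms(2) cong_mult_rcancel_nat by blast
    thus "a = b" using ab by (simp add: cong_def)
  qed
  have sub: "(\<lambda>a. a * c mod n) ` {..<n} \<subseteq> {..<n}" using assms by auto
  have "(\<lambda>a. a * c mod n) ` {..<n} = {..<n}"
    using endo_inj_surj[OF _ sub inj] by simp
  thus ?thesis using inj by (simp add: bij_betw_def)
qed

lemma sum_reindex_mult:
  fixes h :: "nat \<Rightarrow> 'a::comm_monoid_add"
  assumes "n > 0" "coprime c n" "\<forall>y. h (y + n) = h y"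
  shows "(\<Sum>a<n. h (a * c)) = (\<Sum>a<n. h a)"
proof -
  have "(\<Sum>a<n. h (a * c)) = (\<Sum>a<n. h (a * c mod n))"
    using periodic_mod[OF assms(3)] by simp
  also have "\<dots> = (\<Sum>a<n. h a)"
    using sum.reindex_bij_betw[OF bij_mult_mod[OF assms(1,2)], of h] by simp
  finally show ?thesis .
qed

definition zz :: "nat \<Rightarrow> complex" where "zz n = exp (2 * pi * \<i> / of_nat n)"

lemma exp_zz: "exp (2 * pi * \<i> * of_nat a / of_nat n) = zz n ^ a"
proof -
  have "2 * pi * \<i> * of_nat a / of_nat n = of_nat a * (2 * pi * \<i> / of_nat n)" by simp
  thus ?thesis unfolding zz_def by (simp only: exp_of_nat_mult)
qed

lemma zz_n: "n > 0 \<Longrightarrow> zz n ^ n = 1"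
  using exp_zz[of n n] by simp

lemma zz_pow_mod: "n > 0 \<Longrightarrow> zz n ^ (a mod n) = zz n ^ a"
proof -
  assume n: "n > 0"
  have "zz n ^ a = zz n ^ (a mod n + n * (a div n))" by simp
  also have "\<dots> = zz n ^ (a mod n)" by (simp only: power_add power_mult zz_n[OF n]) simp
  finally show ?thesis by simp
qed

lemma zz_dvd: "n > 0 \<Longrightarrow> n dvd k \<Longrightarrow> zz n ^ k = 1"
  by (metis zz_pow_mod dvd_imp_mod_0 power_0)

lemma zz_eq_1: assumes "n > 0" "zz n ^ k = 1" shows "n dvd k"
proof -
  have "zz n ^ k = exp (\<i> * complex_of_real (2 * pi * real k / real n))"
    unfolding exp_zz[symmetric] by (simp add: algebra_simps)
  also have "\<dots> = cis (2 * pi * real k / real n)" by (simp add: cis_conv_exp)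
  finally have "cis (2 * pi * real k / real n) = 1" using assms by simp
  hence "cos (2 * pi * real k / real n) = 1" by (metis Re_complex_of_real complex_Re_numeral cis.sel(1) one_complex.sel(1))
  then obtain j :: int where j: "2 * pi * real k / real n = real_of_int j * 2 * pi"
    using cos_one_2pi_int by blast
  hence "real k = real_of_int j * real n" using assms(1) by (simp add: field_simps)
  hence "int k = j * int n" by (metis of_int_eq_iff of_int_mult of_int_of_nat_eq)
  hence "int n dvd int k" by simp
  thus ?thesis by simp
qed

lemma geom_zz: assumes "n > 0"
  shows "(\<Sum>b<n. (zz n ^ k) ^ b) = (if n dvd k then of_nat n else 0)"
proof (cases "n dvd k")
  case True thus ?thesis using zz_dvd[OF assms] by simp
next
  case False
  hence w: "zz n ^ k \<noteq> 1" using zz_eq_1[OF assms] by blast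
  have "(zz n ^ k) ^ n = 1" by (metis power_mult mult.commute power_one zz_n[OF assms])
  thus ?thesis using geometric_sum[OF w, of n] False by simp
qed

lemma dchar_pos: "dchar m \<chi> \<Longrightarrow> m > 0" by (simp add: dchar_def)

lemma G_coprime:
  assumes ch: "dchar n \<chi>" and b: "coprime b n"
  shows "\<chi> b * (\<Sum>a<n. \<chi> a * zz n ^ (a * b)) = (\<Sum>a<n. \<chi> a * zz n ^ a)"
proof -
  have n: "n > 0" using ch by (simp add: dchar_def)
  define h where "h y = \<chi> y * zz n ^ y" for y
  have per: "\<forall>y. h (y + n) = h y" using ch zz_n[OF n] by (simp add: h_def dchar_def power_add)
  have "\<chi> b * (\<Sum>a<n. \<chi> a * zz n ^ (a * b)) = (\<Sum>a<n. h (a * b))"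
    unfolding sum_distrib_left h_def using ch by (intro sum.cong) (auto simp: dchar_def)
  also have "\<dots> = (\<Sum>a<n. h a)" by (rule sum_reindex_mult[OF n b per])
  finally show ?thesis by (simp add: h_def)
qed

lemma G_noncoprime:
  assumes pr: "primitive_dchar n \<chi>" and b: "\<not> coprime b n"
  shows "(\<Sum>a<n. \<chi> a * zz n ^ (a * b)) = 0"
proof -
  have ch: "dchar n \<chi>" using pr unfolding primitive_dchar_def by (rule conjunct1)
  have n: "n > 0" using ch by (rule dchar_pos)
  define g where "g = gcd b n"
  have g1: "g \<noteq> 1" using b unfolding g_def by (metis coprime_iff_gcd_eq_1)
  have g0: "g > 0" using n unfolding g_def by simp
  define d where "d = n div g"
  have gn: "g dvd n" unfolding g_def by simp
  have nd: "n = d * g" unfolding d_def using gn by simp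
  have "1 < g" using g0 g1 by simp
  hence dlt: "d < n" using n unfolding d_def by (rule div_less_dividend)
  have ddvd: "d dvd n" using nd by simp
  obtain c where c: "coprime c n" "[c = 1] (mod d)" "\<chi> c \<noteq> 1"
    using pr dlt ddvd unfolding primitive_dchar_def by blast
  have c1: "c \<ge> 1"
  proof (rule ccontr)
    assume "\<not> c \<ge> 1" hence "c = 0" by simp
    hence "n = 1" using c(1) by simp
    thus False using dlt g0 nd by simp
  qed
  have "d dvd c - 1" using c(2) c1 by (simp add: cong_altdef_nat)
  moreover have "g dvd b" unfolding g_def by simp
  ultimately have ndiv: "n dvd (c - 1) * b" using nd by (simp add: mult_dvd_mono)
  define h where "h y = \<chi> y * zz n ^ (y * b)" for y
  have per: "\<forall>y. h (y + n) = h y"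
  proof
    fix y
    have "(y + n) * b = y * b + n * b" by (simp add: algebra_simps)
    hence "zz n ^ ((y + n) * b) = zz n ^ (y * b) * (zz n ^ n) ^ b" by (simp only: power_add power_mult)
    thus "h (y + n) = h y" using ch zz_n[OF n] by (simp add: h_def dchar_def)
  qed
  have key: "zz n ^ (a * c * b) = zz n ^ (a * b)" for a
  proof -
    have "a * c * b = a * ((c - 1) + 1) * b" using c1 by simp
    also have "\<dots> = a * b + a * ((c - 1) * b)" by (simp add: algebra_simps)
    finally have "a * c * b = a * b + a * ((c - 1) * b)" .
    hence "zz n ^ (a * c * b) = zz n ^ (a * b) * zz n ^ (a * ((c - 1) * b))" by (simp add: power_add)
    moreover have "zz n ^ (a * ((c - 1) * b)) = 1" using zz_dvd[OF n] ndiv by simp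
    ultimately show ?thesis by simp
  qed
  have "\<chi> c * (\<Sum>a<n. \<chi> a * zz n ^ (a * b)) = (\<Sum>a<n. h (a * c))"
    unfolding sum_distrib_left h_def using ch key by (intro sum.cong) (auto simp: dchar_def mult.commute)
  also have "\<dots> = (\<Sum>a<n. h a)" by (rule sum_reindex_mult[OF n c(1) per])
  finally have "\<chi> c * (\<Sum>a<n. \<chi> a * zz n ^ (a * b)) = (\<Sum>a<n. \<chi> a * zz n ^ (a * b))"
    by (simp add: h_def)
  hence "(\<chi> c - 1) * (\<Sum>a<n. \<chi> a * zz n ^ (a * b)) = 0" by (simp add: algebra_simps)
  thus ?thesis using c(3) by simp
qed

lemma gauss_zz: "gauss_sum n \<chi> = (\<Sum>a<n. \<chi> a * zz n ^ a)"
  unfolding gauss_sum_def exp_zz ..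

lemma gauss_prod:
  assumes pr: "primitive_dchar n \<chi>"
  shows "gauss_sum n (dchar_inv \<chi>) * gauss_sum n \<chi> = of_nat n * \<chi> (n - 1)"
proof -
  have ch: "dchar n \<chi>" using pr unfolding primitive_dchar_def by (rule conjunct1)
  have n: "n > 0" using ch by (rule dchar_pos)
  define T where "T = (\<Sum>a<n. \<chi> a * zz n ^ a)"
  define G where "G b = (\<Sum>a<n. \<chi> a * zz n ^ (a * b))" for b
  have step: "inverse (\<chi> b) * T = G b" for b
  proof (cases "coprime b n")
    case True
    hence "\<chi> b \<noteq> 0" using ch by (simp add: dchar_def)
    moreover have "\<chi> b * G b = T" using G_coprime[OF ch True] by (simp add: G_def T_def)
    ultimately show ?thesis by (metis inverse_unique mult.assoc mult.commute mult.left_neutral right_inverse)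
  next
    case False
    hence "\<chi> b = 0" using ch by (simp add: dchar_def)
    moreover have "G b = 0" using G_noncoprime[OF pr False] by (simp add: G_def)
    ultimately show ?thesis by simp
  qed
  have "gauss_sum n (dchar_inv \<chi>) * gauss_sum n \<chi> = (\<Sum>b<n. zz n ^ b * (inverse (\<chi> b) * T))"
    unfolding gauss_zz T_def[symmetric] dchar_inv_def sum_distrib_right by (simp add: mult_ac)
  also have "\<dots> = (\<Sum>b<n. zz n ^ b * G b)" using step by simp
  also have "\<dots> = (\<Sum>b<n. \<Sum>a<n. \<chi> a * (zz n ^ (a + 1)) ^ b)"
    unfolding G_def sum_distrib_left
  proof (intro sum.cong refl)
    fix b a
    have "(zz n ^ (a + 1)) ^ b = zz n ^ ((a + 1) * b)" by (rule power_mult[symmetric])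
    also have "(a + 1) * b = a * b + b" by simp
    finally have "(zz n ^ (a + 1)) ^ b = zz n ^ (a * b) * zz n ^ b" by (simp only: power_add)
    thus "zz n ^ b * (\<chi> a * zz n ^ (a * b)) = \<chi> a * (zz n ^ (a + 1)) ^ b" by simp
  qed
  also have "\<dots> = (\<Sum>a<n. \<chi> a * (\<Sum>b<n. (zz n ^ (a + 1)) ^ b))"
    by (subst sum.swap) (simp add: sum_distrib_left)
  also have "\<dots> = (\<Sum>a<n. if a = n - 1 then \<chi> a * of_nat n else 0)"
  proof (intro sum.cong refl)
    fix a assume "a \<in> {..<n}"
    hence a: "a < n" by simp
    have "n dvd a + 1 \<longleftrightarrow> a = n - 1"
    proof
      assume "n dvd a + 1" hence "n \<le> a + 1" by (simp add: dvd_imp_le)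
      thus "a = n - 1" using a by simp
    next
      assume "a = n - 1" thus "n dvd a + 1" using n by simp
    qed
    thus "\<chi> a * (\<Sum>b<n. (zz n ^ (a + 1)) ^ b) = (if a = n - 1 then \<chi> a * of_nat n else 0)"
      using geom_zz[OF n, of "a + 1"] by simp
  qed
  also have "\<dots> = of_nat n * \<chi> (n - 1)" using n by (simp add: sum.delta' mult.commute)
  finally show ?thesis .
qed

lemma inv_sum_zero:
  assumes pr: "primitive_dchar n \<chi>" and n1: "n > 1"
  shows "(\<Sum>a<n. inverse (\<chi> a)) = 0"
proof -
  have ch: "dchar n \<chi>" using pr unfolding primitive_dchar_def by (rule conjunct1)
  have n: "n > 0" using n1 by simp
  obtain c where c: "coprime c n" "[c = 1] (mod 1)" "\<chi> c \<noteq> 1"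
    using pr n1 unfolding primitive_dchar_def by auto
  define h where "h y = inverse (\<chi> y)" for y
  have per: "\<forall>y. h (y + n) = h y" using ch by (simp add: h_def dchar_def)
  have "inverse (\<chi> c) * (\<Sum>a<n. h a) = (\<Sum>a<n. h (a * c))"
    unfolding sum_distrib_left h_def using ch by (intro sum.cong) (auto simp: dchar_def mult.commute)
  also have "\<dots> = (\<Sum>a<n. h a)" by (rule sum_reindex_mult[OF n c(1) per])
  finally have "(inverse (\<chi> c) - 1) * (\<Sum>a<n. h a) = 0" by (simp add: algebra_simps)
  moreover have "inverse (\<chi> c) \<noteq> 1" using c(3) by (metis inverse_1 inverse_inverse_eq)
  ultimately have "(\<Sum>a<n. h a) = 0" by simp
  thus ?thesis by (simp add: h_def)
qed



lemma not_coprime_prime: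
  fixes a b :: nat
  assumes "\<not> coprime a b"
  obtains p where "prime p" "p dvd a" "p dvd b"
proof -
  have "gcd a b \<noteq> 1" using assms by (metis coprime_iff_gcd_eq_1)
  then obtain p where "prime p" "p dvd gcd a b" using prime_factor_nat by blast
  thus ?thesis using that by simp
qed

lemma n_dvd_f:
  assumes phi: "dchar f \<phi>" and xi: "primitive_dchar n \<xi>"
    and ind: "\<forall>a. coprime a f \<longrightarrow> \<xi> a = (\<phi> a)^2"
  shows "n dvd f"
proof -
  have xch: "dchar n \<xi>" using xi unfolding primitive_dchar_def by (rule conjunct1)
  have n: "n > 0" using xch by (rule dchar_pos)
  define d where "d = gcd n f"
  have dd: "d dvd n" unfolding d_def by simp
  have "\<not> d < n"
  proof
    assume "d < n"
    then obtain a where a: "coprime a n" "[a = 1] (mod d)" "\<xi> a \<noteq> 1"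
      using xi dd unfolding primitive_dchar_def by blast
    obtain x where x: "[x = a] (mod n)" "[x = 1] (mod f)"
      using crt_gen[of a 1 n f] a(2) unfolding d_def by blast
    have "coprime x f" by (rule cong_imp_coprime[OF cong_sym[OF x(2)]]) simp
    hence "\<xi> x = (\<phi> x)^2" by (rule ind[rule_format])
    also have "\<phi> x = \<phi> 1" using dchar_cong[OF phi x(2)] .
    also have "\<phi> 1 = 1" using phi by (simp add: dchar_def)
    finally have "\<xi> x = 1" by simp
    moreover have "\<xi> x = \<xi> a" using dchar_cong[OF xch x(1)] .
    ultimately show False using a(3) by simp
  qed
  moreover have "d \<le> n" using dd n by (simp add: dvd_imp_le)
  ultimately have "d = n" by simp
  thus ?thesis unfolding d_def by (metis gcd_dvd2)
qed

lemma xi_as_phi: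
  assumes phi: "dchar f \<phi>" and xch: "dchar n \<xi>"
    and ind: "\<forall>a. coprime a f \<longrightarrow> \<xi> a = (\<phi> a)^2" and a: "coprime a n"
  shows "\<exists>x. coprime x f \<and> \<xi> a = (\<phi> x)^2"
proof -
  have f: "f > 0" using phi by (rule dchar_pos)
  define S where "S = {q. prime q \<and> q dvd f \<and> \<not> q dvd n}"
  have "S \<subseteq> {..f}"
  proof
    fix q assume "q \<in> S" hence "q dvd f" by (simp add: S_def)
    thus "q \<in> {..f}" using dvd_imp_le[OF _ f] by simp
  qed
  hence finS: "finite S" by (rule finite_subset) simp
  define m where "m = \<Prod> S"
  have "coprime n m" unfolding m_def
    by (intro prod_coprime_right) (auto simp: S_def intro: coprime_commute[THEN iffD1] prime_imp_coprime)
  hence g: "gcd n m = 1" by (metis coprime_iff_gcd_eq_1)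
  obtain x where x: "[x = a] (mod n)" "[x = 1] (mod m)"
    using crt_gen[of a 1 n m] g by auto
  have xn: "coprime x n" using cong_imp_coprime[OF cong_sym[OF x(1)] a] .
  have "coprime x f"
  proof (rule ccontr)
    assume "\<not> coprime x f"
    then obtain q where q: "prime q" "q dvd x" "q dvd f" by (rule not_coprime_prime)
    show False
    proof (cases "q dvd n")
      case True
      hence "q dvd gcd x n" using q by simp
      moreover have "gcd x n = 1" using xn by (metis coprime_iff_gcd_eq_1)
      ultimately have "q dvd 1" by simp
      thus False using q(1) by simp
    next
      case False
      hence "q \<in> S" using q unfolding S_def by simp
      hence "q dvd m" unfolding m_def using dvd_prodI[OF finS, of q "\<lambda>x. x"] by simp
      hence x1: "[x = 1] (mod q)" using x(2) cong_dvd_modulus_nat by blast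
      have "[x = 0] (mod q)" using q(2) by (simp add: cong_0_iff)
      hence "[1 = 0] (mod q)" using cong_trans[OF cong_sym[OF x1]] by blast
      hence "q dvd 1" by (simp only: cong_0_iff)
      thus False using q(1) by simp
    qed
  qed
  moreover have "\<xi> a = \<xi> x" using dchar_cong[OF xch cong_sym[OF x(1)]] .
  ultimately show ?thesis using ind by auto
qed




lemma prod_primes_dvd:
  fixes g :: "nat \<Rightarrow> nat"
  assumes "finite A" "\<forall>p\<in>A. prime p" "\<forall>p\<in>A. g p = 1 \<or> g p = p" "\<forall>p\<in>A. g p dvd x"
  shows "prod g A dvd x"
  using assms
proof (induction A rule: finite_induct)
  case empty thus ?case by simp
next
  case (insert a A)
  have IH: "prod g A dvd x" using insert by simp
  have "coprime (g a) (prod g A)"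
  proof (cases "g a = 1")
    case True thus ?thesis by simp
  next
    case False
    hence ga: "g a = a" using insert by auto
    have "coprime a (g p)" if "p \<in> A" for p
    proof -
      have "a \<noteq> p" using that insert(2) by auto
      moreover have "prime a" "prime p" using insert(4) that by auto
      ultimately have "coprime a p" using primes_coprime[of a p] by simp
      thus ?thesis using insert(5) that by (metis coprime_1_right insert_iff)
    qed
    thus ?thesis using ga by (simp add: prod_coprime_right)
  qed
  moreover have "g a dvd x" using insert by simp
  ultimately show ?case using IH insert(1,2) by (simp add: divides_mult)
qed

lemma R_phi_inv:
  assumes "dchar f \<phi>" shows "inverse (\<phi> a) \<in> Z_zeta_phi f \<phi>"
  using dchar_inv_eq[OF assms, of a] by (auto intro: R_pow Z_zeta_phi.val R_0)

lemma R_zz: "zz f ^ k \<in> Z_zeta_phi f \<phi>"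
  unfolding zz_def by (intro R_pow Z_zeta_phi.zeta)

lemma zz_div: assumes "n dvd f" "f > 0" shows "zz n = zz f ^ (f div n)"
proof -
  obtain k where k: "f = n * k" using assms(1) by blast
  have n: "n > 0" "k > 0" using k assms(2) by auto
  have "f div n = k" using k n by simp
  hence "zz f ^ (f div n) = zz f ^ k" by simp
  also have "\<dots> = exp (2 * pi * \<i> * of_nat k / of_nat f)" by (rule exp_zz[symmetric])
  also have "2 * pi * \<i> * of_nat k / of_nat f = 2 * pi * \<i> / (of_nat n :: complex)"
    using n unfolding k by (simp add: field_simps)
  finally show ?thesis unfolding zz_def by simp
qed

lemma R_xi:
  assumes phi: "dchar f \<phi>" and xch: "dchar n \<xi>"
    and ind: "\<forall>a. coprime a f \<longrightarrow> \<xi> a = (\<phi> a)^2"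
  shows "\<xi> a \<in> Z_zeta_phi f \<phi> \<and> inverse (\<xi> a) \<in> Z_zeta_phi f \<phi>"
proof (cases "coprime a n")
  case True
  then obtain x where x: "\<xi> a = (\<phi> x)^2" using xi_as_phi[OF phi xch ind] by blast
  have "inverse (\<xi> a) = (inverse (\<phi> x))^2" using x by (simp add: power_inverse)
  thus ?thesis using x R_phi_inv[OF phi] by (auto intro: R_pow Z_zeta_phi.val)
next
  case False
  hence "\<xi> a = 0" using xch by (simp add: dchar_def)
  thus ?thesis by (simp add: R_0)
qed

lemma B2_eq:
  assumes "n > 0"
  shows "B2 n \<chi> = (\<Sum>a<n. \<chi> a * (of_nat a ^ 2 - of_nat n * of_nat a)) / of_nat n
                   + of_nat n / 6 * (\<Sum>a<n. \<chi> a)"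
proof -
  have "of_nat n * (\<chi> a * of_real ((real a / real n)^2 - real a / real n + 1/6))
        = \<chi> a * (of_nat a ^ 2 - of_nat n * of_nat a) / of_nat n + of_nat n / 6 * \<chi> a" for a
    using assms by (simp add: field_simps power2_eq_square)
  hence "B2 n \<chi> = (\<Sum>a<n. \<chi> a * (of_nat a ^ 2 - of_nat n * of_nat a) / of_nat n + of_nat n / 6 * \<chi> a)"
    unfolding B2_def sum_distrib_left by simp
  thus ?thesis by (simp add: sum.distrib sum_divide_distrib sum_distrib_left)
qed





theorem mainTheorem7:
  fixes \<phi> \<xi> :: "nat \<Rightarrow> complex" and f n N M L :: nat
  assumes prim: "primitive_dchar f \<phi>"
    and nontriv: "\<exists>a. coprime a f \<and> \<phi> a \<noteq> 1"
    and pos: "0 < N" "0 < M" "0 < L"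
    and div: "f^2 * M * L dvd N"
    and cop: "coprime (f * M) L"
    and xi_prim: "primitive_dchar n \<xi>"
    and xi_ind: "\<forall>a. coprime a f \<longrightarrow> \<xi> a = (\<phi> a)^2"
  shows "12 * beta_tilde f \<phi> n \<xi> N M L \<in> Z_zeta_phi f \<phi>"
proof -
  let ?R = "Z_zeta_phi f \<phi>"
  have phi: "dchar f \<phi>" using prim unfolding primitive_dchar_def by (rule conjunct1)
  have xch: "dchar n \<xi>" using xi_prim unfolding primitive_dchar_def by (rule conjunct1)
  have f0: "f > 0" using phi by (rule dchar_pos)
  have n0: "n > 0" using xch by (rule dchar_pos)
  have ndf: "n dvd f" using n_dvd_f[OF phi xi_prim xi_ind] .
  have f1: "f \<noteq> 1"
  proof
    assume f: "f = 1"
    have "\<phi> a = 1" for a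
    proof -
      have "\<phi> a = \<phi> 0" using dchar_mod[OF phi, of a] f by simp
      moreover have "\<phi> 1 = \<phi> 0" using dchar_mod[OF phi, of 1] f by simp
      moreover have "\<phi> 1 = 1" using phi by (simp add: dchar_def)
      ultimately show ?thesis by simp
    qed
    thus False using nontriv by blast
  qed
  obtain k where k: "f = n * k" using ndf by blast
  have k0: "k > 0" using k f0 by auto
  define T where "T = T1 f M"
  define I2 where "I2 = phi_T2 \<phi> L"
  define Pp where "Pp = (\<Prod>p\<in>{p. prime p \<and> p dvd f}. p ^ (multiplicity p M + delta f N M p))"
  define P where "P = {p. prime p \<and> p dvd f * T}"
  have T0: "T > 0" unfolding T_def T1_def
    by (rule prod_pos) (auto dest: prime_gt_0_nat)
  have finP: "finite P"
  proof (rule finite_subset)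
    show "P \<subseteq> {..f * T}"
    proof
      fix q assume "q \<in> P" hence "q dvd f * T" by (simp add: P_def)
      thus "q \<in> {..f * T}" using dvd_imp_le[OF _ ] f0 T0 by simp
    qed
  qed simp
  define D where "D = (\<Prod>p\<in>P. if p dvd n then 1 else p)"
  define Q where "Q = (\<Prod>p\<in>P. 1 - \<xi> p / of_nat p ^ 2)"
  define Qr where "Qr = (\<Prod>p\<in>P. if p dvd n then 1 else of_nat p ^ 2 - \<xi> p)"
  have D0: "D > 0" unfolding D_def by (rule prod_pos) (auto simp: P_def dest: prime_gt_0_nat)
  have QD: "of_nat D ^ 2 * Q = Qr"
  proof -
    have "of_nat D ^ 2 * Q = (\<Prod>p\<in>P. (of_nat (if p dvd n then 1 else p))^2 * (1 - \<xi> p / of_nat p ^ 2))"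
      unfolding D_def Q_def of_nat_prod prod_power_distrib prod.distrib ..
    also have "\<dots> = Qr" unfolding Qr_def
    proof (intro prod.cong refl)
      fix p assume "p \<in> P"
      hence p: "prime p" by (simp add: P_def)
      show "(of_nat (if p dvd n then 1 else p))^2 * (1 - \<xi> p / of_nat p ^ 2) =
            (if p dvd n then 1 else of_nat p ^ 2 - \<xi> p)"
      proof (cases "p dvd n")
        case True
        hence "\<not> coprime p n" using p prime_gt_1_nat[OF p] by (simp add: coprime_absorb_left)
        hence "\<xi> p = 0" using xch by (simp add: dchar_def)
        thus ?thesis using True by simp
      next
        case False
        have "p > 0" using p by (simp add: prime_gt_0_nat)
        thus ?thesis using False by (simp add: field_simps)
      qed
    qed
    finally show ?thesis .
  qed
  have DkT: "D dvd k * T"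
    unfolding D_def
  proof (rule prod_primes_dvd[OF finP])
    show "\<forall>p\<in>P. prime p" by (simp add: P_def)
    show "\<forall>p\<in>P. (if p dvd n then 1 else p) = 1 \<or> (if p dvd n then 1 else p) = p" by simp
    show "\<forall>p\<in>P. (if p dvd n then 1 else p) dvd k * T"
    proof
      fix p assume "p \<in> P"
      hence p: "prime p" "p dvd n * k * T" by (simp_all add: P_def k)
      show "(if p dvd n then 1 else p) dvd k * T"
      proof (cases "p dvd n")
        case False
        hence "p dvd k * T" using p by (metis mult.assoc prime_dvd_mult_iff)
        thus ?thesis using False by simp
      qed simp
    qed
  qed
  have Rphi_inv: "\<And>a. inverse (\<phi> a) \<in> ?R" using R_phi_inv[OF phi] .
  have Rxi: "\<And>a. \<xi> a \<in> ?R" "\<And>a. inverse (\<xi> a) \<in> ?R" using R_xi[OF phi xch xi_ind] by auto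
  have Rzzn: "\<And>j. zz n ^ j \<in> ?R"
    using zz_div[OF ndf f0] R_zz by (metis power_mult)
  have tphi: "gauss_sum f (dchar_inv \<phi>) \<in> ?R"
    unfolding gauss_zz dchar_inv_def by (intro R_sum R_mult Rphi_inv R_zz)
  have txi: "gauss_sum n \<xi> \<in> ?R"
    unfolding gauss_zz by (intro R_sum R_mult Rxi Rzzn)
  have RQr: "Qr \<in> ?R" unfolding Qr_def
    by (intro R_prod) (auto intro!: R_1 R_diff R_pow R_nat Rxi)
  have gp: "gauss_sum n (dchar_inv \<xi>) * gauss_sum n \<xi> = of_nat n * \<xi> (n - 1)"
    by (rule gauss_prod[OF xi_prim])
  have beta_eq: "12 * beta_tilde f \<phi> n \<xi> N M L =
     12 * of_nat (f * T) * (of_nat (f^3 * T * I2) / (4 * of_nat n) * of_nat Pp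
       * (gauss_sum f (dchar_inv \<phi>) / gauss_sum n (dchar_inv \<xi>))
       * B2 n (dchar_inv \<xi>) * Q)"
    unfolding beta_tilde_def beta_def T_def I2_def Pp_def Q_def P_def by simp
  show ?thesis
  proof (cases "n = 1")
    case True
    have xi1: "\<xi> a = 1" for a
    proof -
      have "\<xi> a = \<xi> 0" using dchar_mod[OF xch, of a] True by simp
      moreover have "\<xi> 1 = \<xi> 0" using dchar_mod[OF xch, of 1] True by simp
      moreover have "\<xi> 1 = 1" using xch by (simp add: dchar_def)
      ultimately show ?thesis by simp
    qed
    have tb: "gauss_sum n (dchar_inv \<xi>) = 1"
      using True xi1 by (simp add: gauss_sum_def dchar_inv_def)
    have B2v: "B2 n (dchar_inv \<xi>) = 1 / 6"
      using True xi1 by (simp add: B2_def dchar_inv_def)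
    define W where "W = (\<Prod>p\<in>P. p^2 - 1)"
    have primP: "p \<in> P \<Longrightarrow> prime p" for p by (simp add: P_def)
    have QrW: "Qr = of_nat W"
      unfolding Qr_def W_def True xi1 of_nat_prod
    proof (intro prod.cong refl)
      fix p assume "p \<in> P"
      hence p: "prime p" by (rule primP)
      hence "p \<ge> 2" by (rule prime_ge_2_nat)
      hence "1 \<le> p^2" by (simp add: power2_eq_square)
      moreover have "\<not> p dvd 1" using prime_ge_2_nat[OF p] by simp
      ultimately show "(if p dvd 1 then 1 else of_nat p ^ 2 - 1) = (of_nat (p^2 - 1) :: complex)"
        by (simp add: of_nat_diff)
    qed
    have DfT: "D dvd f * T" using DkT True k by simp
    have dv: "2 * D^2 dvd f^4 * T^2 * W"
    proof (cases "even f")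
      case True
      hence "2 dvd f^2" by simp
      moreover have "D^2 dvd (f * T)^2" using DfT by (rule dvd_power_same)
      ultimately have "2 * D^2 dvd f^2 * (f * T)^2" by (rule mult_dvd_mono)
      moreover have "f^2 * (f * T)^2 = f^4 * T^2"
        by (simp add: power_mult_distrib power2_eq_square power4_eq_xxxx)
      ultimately show ?thesis by (metis dvd_mult2)
    next
      case False
      obtain q where q: "prime q" "q dvd f" using prime_factor_nat[OF f1] by blast
      have "odd q" using q False by (metis dvd_trans)
      hence "even (q^2 - 1)" using prime_ge_2_nat[OF q(1)] by simp
      moreover have "q \<in> P" using q unfolding P_def by simp
      hence "q^2 - 1 dvd W" unfolding W_def by (rule dvd_prodI[OF finP])
      ultimately have "2 dvd W" by (metis dvd_trans)
      moreover have "D^2 dvd (f * T)^2" using DfT by (rule dvd_power_same)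
      ultimately have "2 * D^2 dvd W * (f * T)^2" by (rule mult_dvd_mono)
      moreover have "f^4 * T^2 * W = (W * (f * T)^2) * f^2"
        by (simp add: power_mult_distrib power2_eq_square power4_eq_xxxx)
      ultimately show ?thesis by (metis dvd_mult2)
    qed
    then obtain K where K: "f^4 * T^2 * W = 2 * D^2 * K" by blast
    have KC: "(of_nat f)^4 * (of_nat T)^2 * of_nat W = 2 * (of_nat D)^2 * (of_nat K :: complex)"
      using arg_cong[OF K, of "of_nat :: nat \<Rightarrow> complex"] by simp
    have Qeq: "Q = of_nat W / (of_nat D)^2" using QD D0 QrW by (simp add: field_simps)
    have "12 * beta_tilde f \<phi> n \<xi> N M L =
       ((of_nat f)^4 * (of_nat T)^2 * of_nat W) / (2 * (of_nat D)^2)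
       * (of_nat I2 * of_nat Pp * gauss_sum f (dchar_inv \<phi>))"
      unfolding beta_eq B2v Qeq tb
      using D0 True by (simp only: of_nat_mult of_nat_power) (simp add: field_simps power2_eq_square power3_eq_cube power4_eq_xxxx)
    also have "\<dots> = of_nat (K * I2 * Pp) * gauss_sum f (dchar_inv \<phi>)"
      unfolding KC using D0 by (simp add: field_simps)
    finally have eq: "12 * beta_tilde f \<phi> n \<xi> N M L = of_nat (K * I2 * Pp) * gauss_sum f (dchar_inv \<phi>)" .
    show ?thesis unfolding eq by (intro R_mult R_nat tphi)
  next
    case False
    hence n1: "n > 1" using n0 by simp
    define A where "A = (\<Sum>a<n. inverse (\<xi> a) * (of_nat a ^ 2 - of_nat n * of_nat a))"
    have sz: "(\<Sum>a<n. inverse (\<xi> a)) = 0" by (rule inv_sum_zero[OF xi_prim n1])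
    have B2A: "B2 n (dchar_inv \<xi>) = A / of_nat n"
      using B2_eq[OF n0, of "dchar_inv \<xi>"] sz unfolding A_def dchar_inv_def by simp
    have RA: "A \<in> ?R" unfolding A_def
      by (intro R_sum R_mult R_diff R_pow R_nat Rxi)
    define e where "e = \<xi> (n - 1)"
    have "coprime (n - 1) n" by (rule coprime_diff_one_left_nat[OF n0])
    hence e0: "e \<noteq> 0" using xch unfolding e_def by (simp add: dchar_def)
    define tb where "tb = gauss_sum n (dchar_inv \<xi>)"
    define tx where "tx = gauss_sum n \<xi>"
    have gp': "tb * tx = of_nat n * e" using gp unfolding tb_def tx_def e_def .
    have tb0: "tb \<noteq> 0" "tx \<noteq> 0" using gp' e0 n0 by auto
    have inv_tb: "1 / tb = tx * inverse e / of_nat n"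
      using gp' tb0 e0 n0 by (simp add: field_simps)
    have Rie: "inverse e \<in> ?R" unfolding e_def by (rule Rxi)
    have dv: "n^3 * D^2 dvd f^4 * T^2"
    proof -
      have "D^2 dvd (k * T)^2" using DkT by (rule dvd_power_same)
      hence "n^3 * D^2 dvd n^3 * (k * T)^2" by simp
      moreover have "f^4 * T^2 = n^3 * (k * T)^2 * (n * k^2)"
        unfolding k by (simp add: power_mult_distrib power2_eq_square power3_eq_cube power4_eq_xxxx)
      hence "n^3 * (k * T)^2 dvd f^4 * T^2" by (metis dvd_triv_left)
      ultimately show ?thesis by (rule dvd_trans)
    qed
    then obtain K where K: "f^4 * T^2 = n^3 * D^2 * K" by blast
    have KC: "(of_nat f)^4 * (of_nat T)^2 = (of_nat n)^3 * (of_nat D)^2 * (of_nat K :: complex)"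
      using arg_cong[OF K, of "of_nat :: nat \<Rightarrow> complex"] by simp
    have Qeq: "Q = Qr / (of_nat D)^2" using QD D0 by (simp add: field_simps)
    have "12 * beta_tilde f \<phi> n \<xi> N M L =
       3 * ((of_nat f)^4 * (of_nat T)^2) / ((of_nat n)^3 * (of_nat D)^2)
       * (of_nat I2 * of_nat Pp * gauss_sum f (dchar_inv \<phi>) * tx * inverse e * A * Qr)"
    proof -
      have it: "inverse tb = tx * inverse e / of_nat n" using inv_tb by (simp add: divide_inverse)
      show ?thesis
        unfolding beta_eq B2A Qeq divide_inverse[of "gauss_sum f (dchar_inv \<phi>)"] tb_def[symmetric] it
        using n0 D0 by (simp only: of_nat_mult of_nat_power) (simp add: field_simps power2_eq_square power3_eq_cube power4_eq_xxxx)
    qed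
    also have "\<dots> = of_nat (3 * K * I2 * Pp) * gauss_sum f (dchar_inv \<phi>) * tx * inverse e * A * Qr"
      unfolding KC using n0 D0 by (simp add: field_simps)
    finally have eq: "12 * beta_tilde f \<phi> n \<xi> N M L = of_nat (3 * K * I2 * Pp) * gauss_sum f (dchar_inv \<phi>) * tx * inverse e * A * Qr" .
    show ?thesis unfolding eq tx_def by (intro R_mult R_nat tphi txi Rie RA RQr)
  qed
qed


end
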